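(* Let $G=(X,\Sigma,\delta,X_0)$ be an NFA with observable events $\Sigma_o$ and a nonempty set of secret states $X_S\subseteq X$. Then $G$ is Inf-SSO w.r.t. $\Sigma_o$ and $X_S$ if and only if $G$ is $(|\hat X|\,2^{|X\setminus X_S|}-1)$-SSO w.r.t. $\Sigma_o$ and $X_S$, where $\hat X$ is the set of states of $G$ reachable from $X_S$.
   Context: An NFA is $G=(X,\Sigma,\delta,X_0)$ with finite state set $X$, finite event set $\Sigma$, initial states $X_0\subseteq X$, and transition function $\delta:X\times\Sigma\to 2^X$ extended to strings in the usual way. $\Sigma=\Sigma_o\dot\cup\Sigma_{uo}$, and $P:\Sigma^*\to\Sigma_o^*$ is the natural projection erasing unobservable events. $X_{NS}=X\setminus X_S$. A run $x_0\xrightarrow{s_1}x_1\cdots\xrightarrow{s_n}x_n$ means $x_{k+1}\in\delta(x_k,s_{k+1})$, written $x_0\xrightarrow{s}x_n$; it is non-secret if all its states lie in $X_{NS}$. $\hat X$ is the set of states $x$ with $x\in\delta(x_s,w)$ for some $x_s\in X_S$, $w\in\Sigma^*$ (including $X_S$ itself). $K$-SSO ($K\in\mathbb N$): $G$ is strongly $K$-step opaque w.r.t. $\Sigma_o$ and $X_S$ if for every run $x_0\xrightarrow{s}x_s\xrightarrow{t}x_t$ with $x_0\in X_0$, $x_s\in X_S$, $|P(t)|\le K$, there exists a run $x_0'\xrightarrow{s'}x_s'\xrightarrow{t'}x_t'$ with $x_0'\in X_0$, $P(s')=P(s)$, $P(t')=P(t)$, and the subrun $x_s'\xrightarrow{t'}x_t'$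 non-secret. Inf-SSO (strong infinite-step opacity): the same condition required for all such runs with no bound on $|P(t)|$, i.e. $G$ is $K$-SSO for every $K\in\mathbb N$. *)

theory Defs
  imports Main
begin

definition nfa :: "'x set \<Rightarrow> 'e set \<Rightarrow> ('x \<Rightarrow> 'e \<Rightarrow> 'x set) \<Rightarrow> 'x set \<Rightarrow> bool" where
  "nfa X Sig delta X0 \<longleftrightarrow> finite X \<and> finite Sig \<and> X0 \<subseteq> X \<and>
     (\<forall>x\<in>X. \<forall>e\<in>Sig. delta x e \<subseteq> X)"

definition proj :: "'e set \<Rightarrow> 'e list \<Rightarrow> 'e list" where
  "proj SigO s = filter (\<lambda>e. e \<in> SigO) s"

text \<open>A run from x0: a list of steps (event, next state); run_ok checks each
  transition x_{k+1} \<in> delta x_k s_{k+1} with s_{k+1} \<in> Sig.\<close>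
fun run_ok :: "'e set \<Rightarrow> ('x \<Rightarrow> 'e \<Rightarrow> 'x set) \<Rightarrow> 'x \<Rightarrow> ('e \<times> 'x) list \<Rightarrow> bool" where
  "run_ok Sig delta x [] = True"
| "run_ok Sig delta x ((e, y) # r) \<longleftrightarrow> e \<in> Sig \<and> y \<in> delta x e \<and> run_ok Sig delta y r"

definition run_end :: "'x \<Rightarrow> ('e \<times> 'x) list \<Rightarrow> 'x" where
  "run_end x r = (if r = [] then x else snd (last r))"

definition run_label :: "('e \<times> 'x) list \<Rightarrow> 'e list" where
  "run_label r = map fst r"

definition run_states :: "'x \<Rightarrow> ('e \<times> 'x) list \<Rightarrow> 'x set" where
  "run_states x r = insert x (snd ` set r)"

fun delta_star :: "('x \<Rightarrow> 'e \<Rightarrow> 'x set) \<Rightarrow> 'x \<Rightarrow> 'e list \<Rightarrow> 'x set" where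
  "delta_star delta x [] = {x}"
| "delta_star delta x (e # w) = (\<Union>y\<in>delta x e. delta_star delta y w)"

definition Xhat :: "'e set \<Rightarrow> ('x \<Rightarrow> 'e \<Rightarrow> 'x set) \<Rightarrow> 'x set \<Rightarrow> 'x set" where
  "Xhat Sig delta XS = {x. \<exists>xs\<in>XS. \<exists>w\<in>lists Sig. x \<in> delta_star delta xs w}"

definition K_SSO :: "'x set \<Rightarrow> 'e set \<Rightarrow> ('x \<Rightarrow> 'e \<Rightarrow> 'x set) \<Rightarrow> 'x set \<Rightarrow> 'e set \<Rightarrow> 'x set \<Rightarrow> nat \<Rightarrow> bool" where
  "K_SSO X Sig delta X0 SigO XS K \<longleftrightarrow>
    (\<forall>x0 r1 r2. x0 \<in> X0 \<and> run_ok Sig delta x0 r1 \<and> run_end x0 r1 \<in> XS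
        \<and> run_ok Sig delta (run_end x0 r1) r2
        \<and> length (proj SigO (run_label r2)) \<le> K \<longrightarrow>
      (\<exists>x0' r1' r2'. x0' \<in> X0 \<and> run_ok Sig delta x0' r1'
        \<and> run_ok Sig delta (run_end x0' r1') r2'
        \<and> proj SigO (run_label r1') = proj SigO (run_label r1)
        \<and> proj SigO (run_label r2') = proj SigO (run_label r2)
        \<and> run_states (run_end x0' r1') r2' \<subseteq> X - XS))"

definition Inf_SSO :: "'x set \<Rightarrow> 'e set \<Rightarrow> ('x \<Rightarrow> 'e \<Rightarrow> 'x set) \<Rightarrow> 'x set \<Rightarrow> 'e set \<Rightarrow> 'x set \<Rightarrow> bool" where
  "Inf_SSO X Sig delta X0 SigO XS \<longleftrightarrow> (\<forall>K. K_SSO X Sig delta X0 SigO XS K)"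

end

theory Submission
  imports Defs
begin

lemma run_end_Nil[simp]: "run_end x [] = x" by (simp add: run_end_def)
lemma run_end_Cons[simp]: "run_end x (p # r) = run_end (snd p) r"
  by (cases r) (simp_all add: run_end_def)

lemma run_end_append: "run_end x (a @ b) = run_end (run_end x a) b"
  by (induction a arbitrary: x) simp_all

lemma run_ok_append:
  "run_ok Sig delta x (a @ b) \<longleftrightarrow> run_ok Sig delta x a \<and> run_ok Sig delta (run_end x a) b"
proof (induction a arbitrary: x)
  case Nil then show ?case by simp
next
  case (Cons p a)
  obtain e y where "p = (e, y)" by fastforce
  then show ?case using Cons.IH[of y] by simp
qed

lemma run_end_in_states: "run_end x r \<in> run_states x r"
proof (induction r arbitrary: x)
  case Nil then show ?case by (simp add: run_states_def)
next
  case (Cons p r)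
  then have "run_end (snd p) r \<in> run_states (snd p) r" by blast
  then show ?case by (auto simp: run_states_def)
qed

lemma run_states_append:
  "run_states x (a @ b) = run_states x a \<union> run_states (run_end x a) b"
proof (induction a arbitrary: x)
  case Nil then show ?case by (auto simp: run_states_def)
next
  case (Cons p a)
  have "run_states x (p # a @ b) = insert x (run_states (snd p) (a @ b))"
    by (auto simp: run_states_def)
  also have "\<dots> = insert x (run_states (snd p) a \<union> run_states (run_end (snd p) a) b)"
    using Cons by simp
  also have "\<dots> = run_states x (p # a) \<union> run_states (run_end x (p # a)) b"
    by (auto simp: run_states_def)
  finally show ?case by simp
qed

lemma proj_label_append: "proj S (run_label (a @ b)) = proj S (run_label a) @ proj S (run_label b)"
  by (simp add: proj_def run_label_def)

lemma proj_Cons: "proj S (run_label (p # r)) = (if fst p \<in> S then fst p # proj S (run_label r) else proj S (run_label r))"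
  by (simp add: proj_def run_label_def)

lemma proj_Nil: "proj S (run_label []) = []"
  by (simp add: proj_def run_label_def)

lemma proj_split:
  "proj S (run_label r) = u @ w \<Longrightarrow>
   \<exists>a b. r = a @ b \<and> proj S (run_label a) = u \<and> proj S (run_label b) = w"
proof (induction r arbitrary: u)
  case Nil
  then have "u @ w = []" by (simp add: proj_Nil)
  then have "u = []" "w = []" by simp_all
  then show ?case using proj_Nil by blast
next
  case (Cons p r)
  note IH = Cons.IH
  note prems = Cons.prems
  show ?case
  proof (cases "fst p \<in> S")
    case True
    then have eq: "fst p # proj S (run_label r) = u @ w" using prems
      by (simp add: proj_Cons)
    show ?thesis
    proof (cases u)
      case Nil
      then have "p # r = [] @ (p # r)" "proj S (run_label []) = u"
        "proj S (run_label (p # r)) = w" using prems proj_Nil by simp_all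
      then show ?thesis by blast
    next
      case (Cons c u')
      then have 1: "proj S (run_label r) = u' @ w" "c = fst p" using eq by auto
      then obtain a b where ab: "r = a @ b" "proj S (run_label a) = u'" "proj S (run_label b) = w"
        using IH by blast
      have "proj S (run_label (p # a)) = u" using True ab(2) 1(2) Cons by (simp add: proj_Cons)
      moreover have "p # r = (p # a) @ b" using ab(1) by simp
      ultimately show ?thesis using ab(3) by blast
    qed
  next
    case False
    then have "proj S (run_label r) = u @ w" using prems
      by (simp add: proj_Cons)
    then obtain a b where ab: "r = a @ b" "proj S (run_label a) = u" "proj S (run_label b) = w"
      using IH by blast
    have "proj S (run_label (p # a)) = u" using False ab(2) by (simp add: proj_Cons)
    moreover have "p # r = (p # a) @ b" using ab(1) by simp
    ultimately show ?thesis using ab(3) by blast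
  qed
qed

lemma proj_ivt:
  "k \<le> length (proj S (run_label r)) \<Longrightarrow>
   \<exists>p\<le>length r. length (proj S (run_label (take p r))) = k"
proof (induction r arbitrary: k)
  case Nil then show ?case by (simp add: proj_def run_label_def)
next
  case (Cons q r)
  show ?case
  proof (cases k)
    case 0 then show ?thesis by (intro exI[of _ 0]) (simp add: proj_def run_label_def)
  next
    case (Suc k')
    show ?thesis
    proof (cases "fst q \<in> S")
      case True
      then have "k' \<le> length (proj S (run_label r))" using Cons.prems Suc
        by (simp add: proj_def run_label_def)
      then obtain p where "p \<le> length r" "length (proj S (run_label (take p r))) = k'"
        using Cons.IH by blast
      then show ?thesis using True Suc
        by (intro exI[of _ "Suc p"]) (simp add: proj_def run_label_def)
    next
      case False
      then have "k \<le> length (proj S (run_label r))" using Cons.prems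
        by (simp add: proj_def run_label_def)
      then obtain p where "p \<le> length r" "length (proj S (run_label (take p r))) = k"
        using Cons.IH by blast
      then show ?thesis using False
        by (intro exI[of _ "Suc p"]) (simp add: proj_def run_label_def)
    qed
  qed
qed

lemma run_reach:
  "run_ok Sig delta x r \<Longrightarrow> run_end x r \<in> delta_star delta x (run_label r) \<and> run_label r \<in> lists Sig"
proof (induction r arbitrary: x)
  case Nil then show ?case by (simp add: run_label_def)
next
  case (Cons p r)
  obtain e y where p: "p = (e, y)" by fastforce
  then have "e \<in> Sig" "y \<in> delta x e" "run_ok Sig delta y r" using Cons.prems by auto
  then show ?case using Cons.IH[of y] p by (auto simp: run_label_def)
qed

lemma delta_star_in_X:
  assumes "nfa X Sig delta X0" "x \<in> X" "w \<in> lists Sig"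
  shows "delta_star delta x w \<subseteq> X"
  using assms(2,3)
proof (induction w arbitrary: x)
  case Nil then show ?case by simp
next
  case (Cons e w)
  have "\<And>y. y \<in> delta x e \<Longrightarrow> delta_star delta y w \<subseteq> X"
  proof -
    fix y assume "y \<in> delta x e"
    moreover have "delta x e \<subseteq> X" using assms(1) Cons.prems unfolding nfa_def by simp
    ultimately have "y \<in> X" by blast
    then show "delta_star delta y w \<subseteq> X" using Cons.IH Cons.prems by simp
  qed
  then show ?case by auto
qed

lemma Xhat_sub: assumes A: "nfa X Sig delta X0" "XS \<subseteq> X" shows "Xhat Sig delta XS \<subseteq> X"
proof
  fix x assume "x \<in> Xhat Sig delta XS"
  then obtain xs w where "xs \<in> XS" "w \<in> lists Sig" "x \<in> delta_star delta xs w"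
    unfolding Xhat_def by blast
  then show "x \<in> X" using delta_star_in_X[OF A(1), of xs w] A(2) by blast
qed

lemma run_ok_take_drop:
  assumes "run_ok Sig delta x r"
  shows "run_ok Sig delta x (take p r) \<and> run_ok Sig delta (run_end x (take p r)) (drop p r)"
proof -
  have "run_ok Sig delta x (take p r @ drop p r)" using assms by simp
  then show ?thesis unfolding run_ok_append .
qed

lemma run_ok_take: "run_ok Sig delta x r \<Longrightarrow> run_ok Sig delta x (take p r)"
  by (rule conjunct1[OF run_ok_take_drop])

lemma run_ok_drop: "run_ok Sig delta x r \<Longrightarrow> run_ok Sig delta (run_end x (take p r)) (drop p r)"
  by (rule conjunct2[OF run_ok_take_drop])

lemma proj_take_drop: "proj S (run_label r) = proj S (run_label (take p r)) @ proj S (run_label (drop p r))"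
proof -
  have "proj S (run_label r) = proj S (run_label (take p r @ drop p r))" by simp
  also have "\<dots> = proj S (run_label (take p r)) @ proj S (run_label (drop p r))"
    by (rule proj_label_append)
  finally show ?thesis .
qed

definition Est where
  "Est X Sig delta X0 SigO XS ps u = {x'. \<exists>x0' r1' r2'. x0' \<in> X0 \<and> run_ok Sig delta x0' r1'
        \<and> run_ok Sig delta (run_end x0' r1') r2'
        \<and> proj SigO (run_label r1') = ps
        \<and> proj SigO (run_label r2') = u
        \<and> run_states (run_end x0' r1') r2' \<subseteq> X - XS
        \<and> run_end (run_end x0' r1') r2' = x'}"

lemma EstE:
  assumes "x' \<in> Est X Sig delta X0 SigO XS ps u"
  obtains x0' r1' r2' where "x0' \<in> X0" "run_ok Sig delta x0' r1'"
        "run_ok Sig delta (run_end x0' r1') r2'"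
        "proj SigO (run_label r1') = ps"
        "proj SigO (run_label r2') = u"
        "run_states (run_end x0' r1') r2' \<subseteq> X - XS"
        "run_end (run_end x0' r1') r2' = x'"
proof -
  from assms have "\<exists>x0' r1' r2'. x0' \<in> X0 \<and> run_ok Sig delta x0' r1'
        \<and> run_ok Sig delta (run_end x0' r1') r2'
        \<and> proj SigO (run_label r1') = ps
        \<and> proj SigO (run_label r2') = u
        \<and> run_states (run_end x0' r1') r2' \<subseteq> X - XS
        \<and> run_end (run_end x0' r1') r2' = x'" unfolding Est_def by (rule CollectD)
  then obtain x0' r1' r2' where "x0' \<in> X0 \<and> run_ok Sig delta x0' r1'
        \<and> run_ok Sig delta (run_end x0' r1') r2'
        \<and> proj SigO (run_label r1') = ps
        \<and> proj SigO (run_label r2') = u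
        \<and> run_states (run_end x0' r1') r2' \<subseteq> X - XS
        \<and> run_end (run_end x0' r1') r2' = x'" by (elim exE)
  then show ?thesis using that by (elim conjE)
qed

lemma EstI:
  assumes "x0' \<in> X0" "run_ok Sig delta x0' r1'"
        "run_ok Sig delta (run_end x0' r1') r2'"
        "proj SigO (run_label r1') = ps"
        "proj SigO (run_label r2') = u"
        "run_states (run_end x0' r1') r2' \<subseteq> X - XS"
  shows "run_end (run_end x0' r1') r2' \<in> Est X Sig delta X0 SigO XS ps u"
  unfolding Est_def using assms by (intro CollectI exI[of _ x0'] exI[of _ r1'] exI[of _ r2']) simp

lemma Est_sub: "Est X Sig delta X0 SigO XS ps u \<subseteq> X - XS"
proof
  fix x' assume "x' \<in> Est X Sig delta X0 SigO XS ps u"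
  then obtain x0' r1' r2' where "x0' \<in> X0" "run_ok Sig delta x0' r1'"
        "run_ok Sig delta (run_end x0' r1') r2'"
        "proj SigO (run_label r1') = ps"
        "proj SigO (run_label r2') = u"
        "run_states (run_end x0' r1') r2' \<subseteq> X - XS"
        "run_end (run_end x0' r1') r2' = x'" by (rule EstE)
  then show "x' \<in> X - XS" using run_end_in_states[of "run_end x0' r1'" r2'] by blast
qed

lemma Est_cong1:
  assumes "Est X Sig delta X0 SigO XS ps u1 = Est X Sig delta X0 SigO XS ps u2"
  shows "Est X Sig delta X0 SigO XS ps (u1 @ w) \<subseteq> Est X Sig delta X0 SigO XS ps (u2 @ w)"
proof
  fix x' assume "x' \<in> Est X Sig delta X0 SigO XS ps (u1 @ w)"
  then obtain x0' r1' r2' where H: "x0' \<in> X0" "run_ok Sig delta x0' r1'"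
        "run_ok Sig delta (run_end x0' r1') r2'"
        "proj SigO (run_label r1') = ps"
        "proj SigO (run_label r2') = u1 @ w"
        "run_states (run_end x0' r1') r2' \<subseteq> X - XS"
        "run_end (run_end x0' r1') r2' = x'" by (rule EstE)
  obtain a b where ab: "r2' = a @ b" "proj SigO (run_label a) = u1" "proj SigO (run_label b) = w"
    using proj_split[OF H(5)] by blast
  define y where "y = run_end (run_end x0' r1') a"
  have ra: "run_ok Sig delta (run_end x0' r1') a" and rb: "run_ok Sig delta y b"
    using H(3) ab(1) by (simp_all add: run_ok_append y_def)
  have sa: "run_states (run_end x0' r1') a \<subseteq> X - XS" and sb: "run_states y b \<subseteq> X - XS"
    using H(6) ab(1) by (simp_all add: run_states_append y_def)
  have "y \<in> Est X Sig delta X0 SigO XS ps u1"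
    unfolding y_def using EstI[OF H(1,2) ra H(4) ab(2) sa] .
  then have "y \<in> Est X Sig delta X0 SigO XS ps u2" using assms by simp
  then obtain x0'' r1'' r2'' where G: "x0'' \<in> X0" "run_ok Sig delta x0'' r1''"
        "run_ok Sig delta (run_end x0'' r1'') r2''"
        "proj SigO (run_label r1'') = ps"
        "proj SigO (run_label r2'') = u2"
        "run_states (run_end x0'' r1'') r2'' \<subseteq> X - XS"
        "run_end (run_end x0'' r1'') r2'' = y" by (rule EstE)
  have "run_ok Sig delta (run_end x0'' r1'') (r2'' @ b)"
    using G(3,7) rb run_ok_append by metis
  moreover have "run_states (run_end x0'' r1'') (r2'' @ b) \<subseteq> X - XS"
    using G(6,7) sb by (simp add: run_states_append)
  moreover have "proj SigO (run_label (r2'' @ b)) = u2 @ w"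
    using G(5) ab(3) proj_label_append by metis
  moreover have "run_end (run_end x0'' r1'') (r2'' @ b) = x'"
    using G(7) H(7) ab(1) y_def run_end_append by metis
  ultimately show "x' \<in> Est X Sig delta X0 SigO XS ps (u2 @ w)"
    using EstI[OF G(1,2) _ G(4)] by metis
qed

lemma Est_cong:
  assumes "Est X Sig delta X0 SigO XS ps u1 = Est X Sig delta X0 SigO XS ps u2"
  shows "Est X Sig delta X0 SigO XS ps (u1 @ w) = Est X Sig delta X0 SigO XS ps (u2 @ w)"
  using Est_cong1[OF assms] Est_cong1[OF assms[symmetric]] by blast

theorem corollary3p2:
  fixes X :: "'x set" and Sig :: "'e set" and delta :: "'x \<Rightarrow> 'e \<Rightarrow> 'x set"
    and X0 :: "'x set" and SigO :: "'e set" and XS :: "'x set"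
  assumes "nfa X Sig delta X0"
    and "SigO \<subseteq> Sig"
    and "XS \<subseteq> X" and "XS \<noteq> {}"
  shows "Inf_SSO X Sig delta X0 SigO XS \<longleftrightarrow>
    K_SSO X Sig delta X0 SigO XS (card (Xhat Sig delta XS) * 2 ^ card (X - XS) - 1)"
proof
  assume "Inf_SSO X Sig delta X0 SigO XS"
  then show "K_SSO X Sig delta X0 SigO XS (card (Xhat Sig delta XS) * 2 ^ card (X - XS) - 1)"
    by (simp add: Inf_SSO_def)
next
  define N where "N = card (Xhat Sig delta XS) * 2 ^ card (X - XS)"
  assume "K_SSO X Sig delta X0 SigO XS (card (Xhat Sig delta XS) * 2 ^ card (X - XS) - 1)"
  then have KS: "K_SSO X Sig delta X0 SigO XS (N - 1)" by (simp add: N_def)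
  have finX: "finite X" using assms(1) by (simp add: nfa_def)
  have XhX: "Xhat Sig delta XS \<subseteq> X" using Xhat_sub assms(1,3) by blast
  have finXh: "finite (Xhat Sig delta XS)" using XhX finX finite_subset by blast
  have "XS \<subseteq> Xhat Sig delta XS"
  proof
    fix x assume "x \<in> XS"
    then show "x \<in> Xhat Sig delta XS" unfolding Xhat_def
      by (intro CollectI bexI[of _ x] bexI[of _ "[]"]) auto
  qed
  then have "card (Xhat Sig delta XS) \<ge> 1" using assms(4) finXh
    by (metis One_nat_def Suc_leI card_gt_0_iff subset_empty)
  then have N1: "N \<ge> 1" unfolding N_def by simp
  let ?E = "Est X Sig delta X0 SigO XS"
  show "Inf_SSO X Sig delta X0 SigO XS"
    unfolding Inf_SSO_def K_SSO_def
  proof (intro allI impI)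
    fix K' x0 r1 r2
    assume H: "x0 \<in> X0 \<and> run_ok Sig delta x0 r1 \<and> run_end x0 r1 \<in> XS
        \<and> run_ok Sig delta (run_end x0 r1) r2 \<and> length (proj SigO (run_label r2)) \<le> K'"
    define ps where "ps = proj SigO (run_label r1)"
    define xs where "xs = run_end x0 r1"
    have xsS: "xs \<in> XS" using H xs_def by simp
    have claim: "\<And>n. \<forall>r. run_ok Sig delta xs r \<and> length (proj SigO (run_label r)) = n
          \<longrightarrow> ?E ps (proj SigO (run_label r)) \<noteq> {}"
    proof -
      fix n show "\<forall>r. run_ok Sig delta xs r \<and> length (proj SigO (run_label r)) = n
          \<longrightarrow> ?E ps (proj SigO (run_label r)) \<noteq> {}"
      proof (induction n rule: less_induct)
        case (less n)
        show ?case
        proof (intro allI impI)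
          fix r assume R: "run_ok Sig delta xs r \<and> length (proj SigO (run_label r)) = n"
          show "?E ps (proj SigO (run_label r)) \<noteq> {}"
          proof (cases "n \<le> N - 1")
            case True
            have pre: "x0 \<in> X0 \<and> run_ok Sig delta x0 r1 \<and> run_end x0 r1 \<in> XS
                 \<and> run_ok Sig delta (run_end x0 r1) r
                 \<and> length (proj SigO (run_label r)) \<le> N - 1"
              using H R True xs_def by simp
            obtain x0' r1' r2' where C: "x0' \<in> X0" "run_ok Sig delta x0' r1'"
              "run_ok Sig delta (run_end x0' r1') r2'"
              "proj SigO (run_label r1') = proj SigO (run_label r1)"
              "proj SigO (run_label r2') = proj SigO (run_label r)"
              "run_states (run_end x0' r1') r2' \<subseteq> X - XS"
              using KS[unfolded K_SSO_def, rule_format, OF pre] by (elim exE conjE) simp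
            have "run_end (run_end x0' r1') r2' \<in> ?E ps (proj SigO (run_label r))"
              using EstI[OF C(1,2,3) C(4)[folded ps_def] C(5,6)] .
            then show ?thesis by blast
          next
            case False
            then have nN: "n \<ge> N" using N1 by simp
            show ?thesis
            proof
              assume Emp: "?E ps (proj SigO (run_label r)) = {}"
              define pos where "pos = (\<lambda>k. SOME p. p \<le> length r \<and> length (proj SigO (run_label (take p r))) = k)"
              have pos: "\<And>k. k \<le> n \<Longrightarrow> pos k \<le> length r \<and> length (proj SigO (run_label (take (pos k) r))) = k"
              proof -
                fix k assume "k \<le> n"
                then have "\<exists>p\<le>length r. length (proj SigO (run_label (take p r))) = k"
                  using proj_ivt R by metis
                then show "pos k \<le> length r \<and> length (proj SigO (run_label (take (pos k) r))) = k"
                  unfolding pos_def by (metis (mono_tags, lifting) someI_ex)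
              qed
              define f where "f = (\<lambda>k. (run_end xs (take (pos k) r), ?E ps (proj SigO (run_label (take (pos k) r)))))"
              have fsub: "f ` {0..n} \<subseteq> Xhat Sig delta XS \<times> Pow (X - XS)"
              proof
                fix z assume "z \<in> f ` {0..n}"
                then obtain k where k: "k \<le> n" "z = f k" by auto
                have rt: "run_ok Sig delta xs (take (pos k) r)" using run_ok_take[OF conjunct1[OF R]] .
                have "run_end xs (take (pos k) r) \<in> Xhat Sig delta XS"
                  using run_reach[OF rt] xsS unfolding Xhat_def
                  by (intro CollectI bexI[of _ xs] bexI[of _ "run_label (take (pos k) r)"]) simp_all
                then show "z \<in> Xhat Sig delta XS \<times> Pow (X - XS)" using k Est_sub[of X Sig delta X0 SigO XS ps] unfolding f_def by auto
              qed
              have finP: "finite (Xhat Sig delta XS \<times> Pow (X - XS))" using finXh finX by simp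
              have cardP: "card (Xhat Sig delta XS \<times> Pow (X - XS)) = N"
                unfolding N_def using finX by (simp add: card_cartesian_product card_Pow)
              have "\<not> inj_on f {0..n}"
              proof
                assume "inj_on f {0..n}"
                then have "card {0..n} \<le> card (Xhat Sig delta XS \<times> Pow (X - XS))"
                  using card_inj_on_le fsub finP by blast
                then show False using nN cardP by simp
              qed
              then obtain i0 j0 where ij0: "i0 \<in> {0..n}" "j0 \<in> {0..n}" "i0 \<noteq> j0" "f i0 = f j0"
                unfolding inj_on_def by blast
              obtain i j where ij: "i < j" "j \<le> n" "f i = f j"
                using ij0 by (metis atLeastAtMost_iff linorder_neqE_nat)
              define a where "a = take (pos i) r"
              define b where "b = drop (pos j) r"
              have pi: "length (proj SigO (run_label a)) = i" using pos ij a_def by simp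
              have pj: "length (proj SigO (run_label (take (pos j) r))) = j" using pos ij by simp
              have ee: "run_end xs a = run_end xs (take (pos j) r)"
                and EE: "?E ps (proj SigO (run_label a)) = ?E ps (proj SigO (run_label (take (pos j) r)))"
                using ij(3) unfolding f_def a_def by auto
              have ra: "run_ok Sig delta xs a" unfolding a_def using run_ok_take[OF conjunct1[OF R]] .
              have "run_ok Sig delta (run_end xs (take (pos j) r)) b"
                unfolding b_def using run_ok_drop[OF conjunct1[OF R]] .
              then have rr: "run_ok Sig delta xs (a @ b)" using ra ee by (simp add: run_ok_append)
              have lr: "proj SigO (run_label r) = proj SigO (run_label (take (pos j) r)) @ proj SigO (run_label b)"
                using proj_take_drop b_def by blast
              have len: "length (proj SigO (run_label (a @ b))) < n"
                using lr pi pj R ij(1) by (simp add: proj_label_append)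
              have "?E ps (proj SigO (run_label (a @ b))) = ?E ps (proj SigO (run_label r))"
                using Est_cong[OF EE] lr by (simp add: proj_label_append)
              then have "?E ps (proj SigO (run_label (a @ b))) = {}" using Emp by simp
              then show False using less.IH len rr by blast
            qed
          qed
        qed
      qed
    qed
    have r2ok: "run_ok Sig delta xs r2" using H xs_def by simp
    have "?E ps (proj SigO (run_label r2)) \<noteq> {}"
      using claim[of "length (proj SigO (run_label r2))", rule_format, OF conjI[OF r2ok refl]] .
    then obtain x' where "x' \<in> ?E ps (proj SigO (run_label r2))" by blast
    then obtain x0' r1' r2' where W: "x0' \<in> X0" "run_ok Sig delta x0' r1'"
        "run_ok Sig delta (run_end x0' r1') r2'"
        "proj SigO (run_label r1') = ps"
        "proj SigO (run_label r2') = proj SigO (run_label r2)"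
        "run_states (run_end x0' r1') r2' \<subseteq> X - XS"
      by (rule EstE)
    show "\<exists>x0' r1' r2'. x0' \<in> X0 \<and> run_ok Sig delta x0' r1'
        \<and> run_ok Sig delta (run_end x0' r1') r2'
        \<and> proj SigO (run_label r1') = proj SigO (run_label r1)
        \<and> proj SigO (run_label r2') = proj SigO (run_label r2)
        \<and> run_states (run_end x0' r1') r2' \<subseteq> X - XS"
      apply (rule exI[of _ x0'], rule exI[of _ r1'], rule exI[of _ r2'])
      using W by (simp add: ps_def)
  qed
qed

end
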